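(* Let $\mathcal{M}=((\{X_t\},X),\mathcal{A},\psi,\{Q_t\},(c,h),T)$ be an approximable MDP with terminal cost decomposition $h=h_1+h_2$, data $b,f_1,f_2$ and weight function $w$ as in the context, and let $J_t$ be its optimal cost-to-go functions. For $\lambda>0$ let $\tilde J_t^{\lambda}$ be the optimal cost-to-go functions of the $\lambda$-smoothed MDP $\tilde{\mathcal{M}}_\lambda$. Then for every $\theta>0$ there exists $\Lambda\in\mathbb{R}$ such that for all $\lambda>\Lambda$ and all $t\in\{0,\dots,T-1\}$, $$\sup_{x\in X_t}\big|\tilde J^{\lambda}_t(x)-J_t(x)\big|\le\big(\|J_T\|_w+\|\tilde J^{\lambda}_T\|_w\big)\,\theta .$$
   Context: A finite horizon MDP $\mathcal{M}=((\{X_t\}_{t},X),\mathcal{A},\psi,\{Q_t\}_t,(c,h),T)$ consists of: a state space $X$ with Borel subsets $X_t\subseteq X$ (state space at time $t$); a locally compact Borel space $\mathcal{A}$ of actions with metric $d_A$; a map $\psi$ assigning to each $x\in X$ a measurable set $\psi(x)\subseteq\mathcal{A}$ of feasible actions, with $\mathbb{K}_t=\{(x,a):x\in X_t,a\in\psi(x)\}$, $\mathbb{K}=\{(x,a):x\in X,a\in\psi(x)\}$ measurable; stochastic kernels $Q_t(\cdot\mid x,a)$, probability measures on $X_{t+1}$ measurable in $(x,a)$; a measurable stage cost $c:\mathbb{K}\to\mathbb{R}$; a measurable terminal cost $h:X\to\mathbb{R}$; a horizon $T\in\mathbb{N}$. Its optimal cost-to-go functions are $J_T=h$ on $X_T$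 and $J_t(x)=\inf_{a\in\psi(x)}\{c(x,a)+\int_{X_{t+1}}J_{t+1}(y)Q_t(dy\mid x,a)\}$ for $x\in X_t$, $t=T-1,\dots,0$. For $v:X\to\mathbb{R}$ set $\zeta_{v,t}(x,a)=\int_{X_{t+1}}v(y)Q_t(dy\mid x,a)$. For a positive function $w$, $\|v\|_w=\sup_x |v(x)|/w(x)$. The Hausdorff distance of sets is $d_H$. The MDP is approximable if: (1) $X=\mathbb{R}^m$ (Euclidean metric $d_X$); (2) $\psi(x)$ is compact for all $x$; (3) $d_H(\psi(x),\psi(y))\le L_\psi d_X(x,y)$ for some $L_\psi>0$; (4) $c$ is Lipschitz on $\mathbb{K}$ (constant $L_c$), and $h=h_1+h_2$ where $h_1$ is Lipschitz and $h_2(x)=f_1(x)$ if $x<b$ (componentwise), $h_2(x)=f_2(x)$ otherwise, for some $b\in\mathbb{R}^m$ and bounded Lipschitz $f_1,f_2$; and there are a positive lower semicontinuous $w:X\to\mathbb{R}$ and $\bar c>0$ with $|h_1(x)|+\|h_2\|_\infty+\sup_{a\in\psi(x)}|c(x,a)|\le\bar c\,w(x)$; (5) $\zeta_{w,t}$ is upper semicontinuous on $\mathbb{K}_t$ and $\zeta_{w,t}(x,a)\le\bar d\,w(x)$ on $\mathbb{K}_t$ for some $\bar d>0$; (6) for each bounded continuous $v$ and each $t$, $\zeta_{v,t}$ is continuous on $\mathbb{K}$; (7) there is $L_q>0$ such that for every $t$, all $(x,a),(y,a')\in\mathbb{K}_t$ and every Lipschitz $v$ with constant $L_v$, $|\zeta_{v,t}(x,a)-\zeta_{v,t}(y,a')|\le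 L_qL_v(d_X(x,y)+d_A(a,a'))$; (8) for every $\theta>0$ there is $\Lambda$ with $\sup_{x\in X,u\in\psi(x)}\int_{\mathcal{R}_{\lambda,b}}w(y)Q_{T-1}(dy\mid x,u)<\theta$ for all $\lambda>\Lambda$. Here $g_{\lambda,b}(x)=\prod_{i=1}^m g_i(x)$ with $g_i(x)=1$ if $x_i\le b_i-1/\lambda$, $g_i(x)=-\lambda(x_i-b_i)$ if $b_i-1/\lambda<x_i<b_i$, $g_i(x)=0$ if $x_i\ge b_i$, and $\mathcal{R}_{\lambda,b}=\{x: g_{\lambda,b}(x)\ne\mathbb{1}_{\{z:z<b\}}(x)\}$. The $\lambda$-smoothed MDP $\tilde{\mathcal{M}}_\lambda$ is $\mathcal{M}$ with terminal cost $h$ replaced by $h_1+\tilde h_\lambda$, where $\tilde h_\lambda=f_1g_{\lambda,b}+f_2(1-g_{\lambda,b})$. *)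

theory Defs
  imports "HOL-Analysis.Analysis" "HOL-Probability.Probability"
begin

definition hausdist :: "'a::metric_space set \<Rightarrow> 'a set \<Rightarrow> real" where
  "hausdist A B = max (SUP a\<in>A. infdist a B) (SUP b\<in>B. infdist b A)"

definition usc_on :: "'a::metric_space set \<Rightarrow> ('a \<Rightarrow> real) \<Rightarrow> bool" where
  "usc_on S f \<longleftrightarrow> (\<forall>p\<in>S. \<forall>e>0. \<exists>d>0. \<forall>q\<in>S. dist q p < d \<longrightarrow> f q < f p + e)"

definition lsc_on :: "'a::metric_space set \<Rightarrow> ('a \<Rightarrow> real) \<Rightarrow> bool" where
  "lsc_on S f \<longleftrightarrow> (\<forall>p\<in>S. \<forall>e>0. \<exists>d>0. \<forall>q\<in>S. dist q p < d \<longrightarrow> f p - e < f q)"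

definition wnorm :: "('x \<Rightarrow> real) \<Rightarrow> ('x \<Rightarrow> real) \<Rightarrow> ereal" where
  "wnorm w v = (SUP x. ereal (\<bar>v x\<bar> / w x))"

definition vless :: "real^'m \<Rightarrow> real^'m \<Rightarrow> bool" where
  "vless x b \<longleftrightarrow> (\<forall>i. x $ i < b $ i)"

definition zeta :: "(nat \<Rightarrow> 'x set) \<Rightarrow> (nat \<Rightarrow> 'x \<times> 'a \<Rightarrow> 'x measure)
    \<Rightarrow> ('x \<Rightarrow> real) \<Rightarrow> nat \<Rightarrow> 'x \<times> 'a \<Rightarrow> real" where
  "zeta Xs Q v t p = (LINT y:Xs (Suc t)|Q t p. v y)"

definition bellman :: "(nat \<Rightarrow> 'x set) \<Rightarrow> ('x \<Rightarrow> 'a set) \<Rightarrow> (nat \<Rightarrow> 'x \<times> 'a \<Rightarrow> 'x measure)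
    \<Rightarrow> ('x \<times> 'a \<Rightarrow> real) \<Rightarrow> nat \<Rightarrow> ('x \<Rightarrow> real) \<Rightarrow> 'x \<Rightarrow> real" where
  "bellman Xs \<psi> Q c t v x = (INF a\<in>\<psi> x. c (x, a) + zeta Xs Q v t (x, a))"

(* cost-to-go with n steps remaining before horizon T *)
primrec ctg_rem :: "(nat \<Rightarrow> 'x set) \<Rightarrow> ('x \<Rightarrow> 'a set) \<Rightarrow> (nat \<Rightarrow> 'x \<times> 'a \<Rightarrow> 'x measure)
    \<Rightarrow> ('x \<times> 'a \<Rightarrow> real) \<Rightarrow> ('x \<Rightarrow> real) \<Rightarrow> nat \<Rightarrow> nat \<Rightarrow> 'x \<Rightarrow> real" where
  "ctg_rem Xs \<psi> Q c h T 0 = h"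
| "ctg_rem Xs \<psi> Q c h T (Suc n) = bellman Xs \<psi> Q c (T - Suc n) (ctg_rem Xs \<psi> Q c h T n)"

definition cost_to_go :: "(nat \<Rightarrow> 'x set) \<Rightarrow> ('x \<Rightarrow> 'a set) \<Rightarrow> (nat \<Rightarrow> 'x \<times> 'a \<Rightarrow> 'x measure)
    \<Rightarrow> ('x \<times> 'a \<Rightarrow> real) \<Rightarrow> ('x \<Rightarrow> real) \<Rightarrow> nat \<Rightarrow> nat \<Rightarrow> 'x \<Rightarrow> real" where
  "cost_to_go Xs \<psi> Q c h T t = ctg_rem Xs \<psi> Q c h T (T - t)"

definition g_comp :: "real \<Rightarrow> real \<Rightarrow> real \<Rightarrow> real" where
  "g_comp lam bi xi = (if xi \<le> bi - 1 / lam then 1 else if xi < bi then - lam * (xi - bi) else 0)"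

definition g_smooth :: "real \<Rightarrow> real^'m \<Rightarrow> real^'m \<Rightarrow> real" where
  "g_smooth lam b x = (\<Prod>i\<in>UNIV. g_comp lam (b $ i) (x $ i))"

definition R_set :: "real \<Rightarrow> real^'m \<Rightarrow> (real^'m) set" where
  "R_set lam b = {x. g_smooth lam b x \<noteq> (if vless x b then 1 else 0)}"

definition h_smooth :: "real \<Rightarrow> real^'m \<Rightarrow> (real^'m \<Rightarrow> real) \<Rightarrow> (real^'m \<Rightarrow> real) \<Rightarrow> real^'m \<Rightarrow> real" where
  "h_smooth lam b f1 f2 x = f1 x * g_smooth lam b x + f2 x * (1 - g_smooth lam b x)"

end

theory Submission
  imports Defs
begin


lemma inf_abs_le:
  fixes f :: "'b \<Rightarrow> real"
  assumes "S \<noteq> {}" "\<And>a. a \<in> S \<Longrightarrow> \<bar>f a\<bar> \<le> B"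
  shows "\<bar>INF a\<in>S. f a\<bar> \<le> B"
proof -
  obtain a0 where a0: "a0 \<in> S" using assms(1) by blast
  have bdd: "bdd_below (f ` S)"
    by (rule bdd_belowI2[of _ "-B"]) (use assms(2) in force)
  have "(INF a\<in>S. f a) \<le> f a0" by (rule cINF_lower[OF bdd a0])
  also have "\<dots> \<le> B" using assms(2)[OF a0] by linarith
  finally have 1: "(INF a\<in>S. f a) \<le> B" .
  have "-B \<le> (INF a\<in>S. f a)"
    by (rule cINF_greatest[OF assms(1)]) (use assms(2) in force)
  with 1 show ?thesis by linarith
qed

lemma inf_diff_le:
  fixes f g :: "'b \<Rightarrow> real"
  assumes "S \<noteq> {}" "\<And>a. a \<in> S \<Longrightarrow> \<bar>f a\<bar> \<le> B" "\<And>a. a \<in> S \<Longrightarrow> \<bar>g a\<bar> \<le> B'"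
    and "\<And>a. a \<in> S \<Longrightarrow> \<bar>f a - g a\<bar> \<le> D"
  shows "\<bar>(INF a\<in>S. f a) - (INF a\<in>S. g a)\<bar> \<le> D"
proof -
  have bf: "bdd_below (f ` S)"
    by (rule bdd_belowI2[of _ "-B"]) (use assms(2) in force)
  have bg: "bdd_below (g ` S)"
    by (rule bdd_belowI2[of _ "-B'"]) (use assms(3) in force)
  have "(INF a\<in>S. f a) - D \<le> (INF a\<in>S. g a)"
  proof (rule cINF_greatest[OF assms(1)])
    fix a assume a: "a \<in> S"
    have "(INF a\<in>S. f a) \<le> f a" by (rule cINF_lower[OF bf a])
    then show "(INF a\<in>S. f a) - D \<le> g a" using assms(4)[OF a] by linarith
  qed
  moreover have "(INF a\<in>S. g a) - D \<le> (INF a\<in>S. f a)"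
  proof (rule cINF_greatest[OF assms(1)])
    fix a assume a: "a \<in> S"
    have "(INF a\<in>S. g a) \<le> g a" by (rule cINF_lower[OF bg a])
    then show "(INF a\<in>S. g a) - D \<le> f a" using assms(4)[OF a] by linarith
  qed
  ultimately show ?thesis by linarith
qed

lemma mcshane:
  fixes f :: "'b::metric_space \<Rightarrow> real"
  assumes L: "L-lipschitz_on S f" and S: "S \<noteq> {}"
  shows "\<exists>g. L-lipschitz_on UNIV g \<and> (\<forall>x\<in>S. g x = f x)"
proof -
  have L0: "0 \<le> L" using L by (rule lipschitz_on_nonneg)
  obtain y0 where y0: "y0 \<in> S" using S by blast
  have lip: "\<And>x y. x \<in> S \<Longrightarrow> y \<in> S \<Longrightarrow> \<bar>f x - f y\<bar> \<le> L * dist x y"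
    using L by (auto simp: lipschitz_on_def dist_real_def)
  define g where "g x = (INF y\<in>S. f y + L * dist x y)" for x
  have bdd: "bdd_below ((\<lambda>y. f y + L * dist x y) ` S)" for x
  proof (rule bdd_belowI2[of _ "f y0 - L * dist x y0"])
    fix y assume y: "y \<in> S"
    have "f y0 - f y \<le> L * dist y y0" using lip[OF y0 y] by (simp add: dist_commute)
    moreover have "L * dist y y0 \<le> L * dist x y + L * dist x y0"
      using mult_left_mono[OF dist_triangle3[of y y0 x] L0] by (simp add: algebra_simps dist_commute)
    ultimately show "f y0 - L * dist x y0 \<le> f y + L * dist x y" by linarith
  qed
  have gle: "g x \<le> f y + L * dist x y" if "y \<in> S" for x y
    unfolding g_def by (rule cINF_lower[OF bdd that])
  have geq: "g x = f x" if x: "x \<in> S" for x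
  proof -
    have "g x \<le> f x" using gle[OF x, of x] by simp
    moreover have "f x \<le> g x" unfolding g_def
    proof (rule cINF_greatest[OF S])
      fix y assume y: "y \<in> S"
      have "\<bar>f x - f y\<bar> \<le> L * dist x y" by (rule lip[OF x y])
      then show "f x \<le> f y + L * dist x y" by arith
    qed
    ultimately show ?thesis by simp
  qed
  have gg: "g x \<le> g z + L * dist x z" for x z
  proof -
    have "g x - L * dist x z \<le> g z" unfolding g_def[of z]
    proof (rule cINF_greatest[OF S])
      fix y assume y: "y \<in> S"
      have "g x \<le> f y + L * dist x y" by (rule gle[OF y])
      moreover have "L * dist x y \<le> L * dist x z + L * dist z y"
        using mult_left_mono[OF dist_triangle[of x y z] L0] by (simp add: algebra_simps)
      ultimately show "g x - L * dist x z \<le> f y + L * dist z y" by linarith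
    qed
    then show ?thesis by linarith
  qed
  have "L-lipschitz_on UNIV g"
  proof (rule lipschitz_onI[OF _ L0])
    fix x z :: 'b
    show "dist (g x) (g z) \<le> L * dist x z"
      using gg[of x z] gg[of z x] by (simp add: dist_real_def dist_commute abs_le_iff)
  qed
  then show ?thesis using geq by blast
qed

lemma lip_mult:
  fixes a b :: "'b::metric_space \<Rightarrow> real"
  assumes "La-lipschitz_on S a" "Lb-lipschitz_on S b" "\<And>x. x \<in> S \<Longrightarrow> \<bar>a x\<bar> \<le> A"
    "\<And>x. x \<in> S \<Longrightarrow> \<bar>b x\<bar> \<le> B" "0 \<le> A" "0 \<le> B"
  shows "(A * Lb + B * La)-lipschitz_on S (\<lambda>x. a x * b x)"
proof (rule lipschitz_onI)
  have La: "0 \<le> La" "0 \<le> Lb" using assms(1,2) lipschitz_on_nonneg by auto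
  fix x y assume x: "x \<in> S" and y: "y \<in> S"
  have A: "0 \<le> A" "0 \<le> B" using assms(5,6) by auto
  have da: "\<bar>a x - a y\<bar> \<le> La * dist x y" and db: "\<bar>b x - b y\<bar> \<le> Lb * dist x y"
    using assms(1,2) x y by (auto simp: lipschitz_on_def dist_real_def)
  have "a x * b x - a y * b y = a x * (b x - b y) + b y * (a x - a y)" by (simp add: algebra_simps)
  then have "\<bar>a x * b x - a y * b y\<bar> \<le> \<bar>a x\<bar> * \<bar>b x - b y\<bar> + \<bar>b y\<bar> * \<bar>a x - a y\<bar>"
    by (simp add: abs_mult[symmetric] abs_triangle_ineq)
  also have "\<dots> \<le> A * (Lb * dist x y) + B * (La * dist x y)"
    by (intro add_mono mult_mono) (use assms(3)[OF x] assms(4)[OF y] da db A in auto)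
  finally show "dist (a x * b x) (a y * b y) \<le> (A * Lb + B * La) * dist x y"
    by (simp add: dist_real_def algebra_simps)
next
  show "0 \<le> A * Lb + B * La"
    using assms(5,6) lipschitz_on_nonneg[OF assms(1)] lipschitz_on_nonneg[OF assms(2)] by simp
qed

lemma lip_meas:
  fixes f :: "'b::metric_space \<Rightarrow> real"
  assumes L: "L-lipschitz_on S f" and S: "S \<in> sets borel"
  shows "(\<lambda>y. indicator S y * f y) \<in> borel_measurable borel"
proof (cases "S = {}")
  case True then show ?thesis by simp
next
  case False
  obtain g where g: "L-lipschitz_on UNIV g" "\<forall>x\<in>S. g x = f x" using mcshane[OF L False] by blast
  have gm: "g \<in> borel_measurable borel"
    by (rule borel_measurable_continuous_onI[OF lipschitz_on_continuous_on[OF g(1)]])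
  have "(\<lambda>y. indicator S y * g y) \<in> borel_measurable borel"
    using gm S by (intro borel_measurable_times) auto
  moreover have "(\<lambda>y. indicator S y * g y) = (\<lambda>y. indicator S y * f y)"
    using g(2) by (auto simp: indicator_def)
  ultimately show ?thesis by simp
qed



locale mdpL =
  fixes Xs :: "nat \<Rightarrow> (real^'m) set"
    and \<psi> :: "real^'m \<Rightarrow> 'a::metric_space set"
    and Q :: "nat \<Rightarrow> (real^'m) \<times> 'a \<Rightarrow> (real^'m) measure"
    and c :: "(real^'m) \<times> 'a \<Rightarrow> real"
    and w :: "real^'m \<Rightarrow> real"
    and T :: nat and L\<psi> Lc Lq cbar dbar :: real
  assumes Xs_borel: "\<And>t. t \<le> T \<Longrightarrow> Xs t \<in> sets borel"
    and \<psi>_ne: "\<And>x. \<psi> x \<noteq> {}"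
    and \<psi>_compact: "\<And>x. compact (\<psi> x)"
    and L\<psi>: "0 \<le> L\<psi>"
    and \<psi>_lip: "\<And>x y. hausdist (\<psi> x) (\<psi> y) \<le> L\<psi> * dist x y"
    and c_lip: "Lc-lipschitz_on {(x, a). a \<in> \<psi> x} c"
    and Q_prob: "\<And>t x a. t < T \<Longrightarrow> a \<in> \<psi> x \<Longrightarrow> prob_space (Q t (x,a)) \<and> sets (Q t (x,a)) = sets borel
                      \<and> emeasure (Q t (x,a)) (Xs (Suc t)) = 1"
    and w_pos: "\<And>x. 0 < w x"
    and w_meas: "w \<in> borel_measurable borel"
    and c_bnd: "\<And>x a. a \<in> \<psi> x \<Longrightarrow> \<bar>c (x, a)\<bar> \<le> cbar * w x"
    and cbar: "0 \<le> cbar" and dbar: "0 \<le> dbar" and Lq: "0 \<le> Lq"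
    and w_int: "\<And>t x a. t < T \<Longrightarrow> x \<in> Xs t \<Longrightarrow> a \<in> \<psi> x \<Longrightarrow>
          set_nn_integral (Q t (x,a)) (Xs (Suc t)) (\<lambda>y. ennreal (w y)) \<le> ennreal (dbar * w x)"
    and zlip: "\<And>t x a y a' v Lv. t < T \<Longrightarrow> x \<in> Xs t \<Longrightarrow> a \<in> \<psi> x \<Longrightarrow> y \<in> Xs t \<Longrightarrow> a' \<in> \<psi> y \<Longrightarrow>
          Lv-lipschitz_on UNIV v \<Longrightarrow>
          \<bar>zeta Xs Q v t (x,a) - zeta Xs Q v t (y,a')\<bar> \<le> Lq * Lv * (dist x y + dist a a')"
begin

definition J where "J u t = cost_to_go Xs \<psi> Q c u T t"

definition good where "good s v \<longleftrightarrow> (\<lambda>y. indicator (Xs s) y * v y) \<in> borel_measurable borel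
   \<and> (\<exists>C M. 0 \<le> C \<and> 0 \<le> M \<and> (\<forall>y\<in>Xs s. \<bar>v y\<bar> \<le> C * w y + M))"

lemma J_T: "J u T = u" by (simp add: J_def cost_to_go_def)

lemma J_step: assumes "t < T" shows "J u t = bellman Xs \<psi> Q c t (J u (Suc t))"
proof -
  have "T - t = Suc (T - Suc t)" using assms by simp
  moreover have "T - Suc (T - Suc t) = t" using assms by simp
  ultimately show ?thesis unfolding J_def cost_to_go_def by simp
qed

lemma zeta_alt: "zeta Xs Q v t p = integral\<^sup>L (Q t p) (\<lambda>y. indicator (Xs (Suc t)) y * v y)"
  by (simp add: zeta_def set_lebesgue_integral_def)

context
  fixes t x a
  assumes t: "t < T" and a: "a \<in> \<psi> x"
begin

interpretation P: prob_space "Q t (x,a)" using Q_prob[OF t a] by simp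

lemma sQ: "sets (Q t (x,a)) = sets borel" using Q_prob[OF t a] by simp
lemma spQ: "space (Q t (x,a)) = UNIV" using sets_eq_imp_space_eq[OF sQ] by simp
lemma XQ: "Xs (Suc t) \<in> sets (Q t (x,a))" using sQ Xs_borel[of "Suc t"] t by simp
lemma eQ: "emeasure (Q t (x,a)) (Xs (Suc t)) = 1" using Q_prob[OF t a] by simp

lemma meas_good: "good (Suc t) v \<Longrightarrow> (\<lambda>y. indicator (Xs (Suc t)) y * v y) \<in> borel_measurable (Q t (x,a))"
  unfolding good_def using measurable_cong_sets[OF sQ refl] by auto

lemma int_good:
  assumes x: "x \<in> Xs t" and g: "good (Suc t) v"
  shows "integrable (Q t (x,a)) (\<lambda>y. indicator (Xs (Suc t)) y * v y)"
proof -
  let ?M = "Q t (x,a)" let ?X = "Xs (Suc t)"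
  obtain C M where CM: "0 \<le> C" "0 \<le> M" "\<forall>y\<in>?X. \<bar>v y\<bar> \<le> C * w y + M" using g unfolding good_def by auto
  have wm: "w \<in> borel_measurable ?M" using measurable_cong_sets[OF sQ refl] w_meas by auto
  have im: "indicator ?X \<in> borel_measurable ?M" using XQ by simp
  have wi: "integrable ?M (\<lambda>y. indicator ?X y * w y)"
  proof (subst integrable_iff_bounded, safe)
    show "(\<lambda>y. indicator ?X y * w y) \<in> borel_measurable ?M" by (rule borel_measurable_times[OF im wm])
    have "(\<integral>\<^sup>+ y. ennreal (norm (indicator ?X y * w y)) \<partial>?M) = set_nn_integral ?M ?X (\<lambda>y. ennreal (w y))"
      by (intro nn_integral_cong) (auto simp: indicator_def less_imp_le[OF w_pos])
    also have "\<dots> \<le> ennreal (dbar * w x)" by (rule w_int[OF t x a])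
    also have "\<dots> < \<infinity>" by simp
    finally show "(\<integral>\<^sup>+ y. ennreal (norm (indicator ?X y * w y)) \<partial>?M) < \<infinity>" .
  qed
  have ii: "integrable ?M (indicator ?X :: _ \<Rightarrow> real)"
    by (rule P.integrable_const_bound[where B=1]) (auto simp: im)
  have "integrable ?M (\<lambda>y. C * (indicator ?X y * w y) + M * indicator ?X y)"
    using wi ii by auto
  then show ?thesis
  proof (rule Bochner_Integration.integrable_bound)
    show "(\<lambda>y. indicator ?X y * v y) \<in> borel_measurable ?M" by (rule meas_good[OF g])
    show "AE y in ?M. norm (indicator ?X y * v y) \<le> norm (C * (indicator ?X y * w y) + M * indicator ?X y)"
      using CM less_imp_le[OF w_pos] by (auto simp: indicator_def)
  qed
qed

lemma zeta_diff_enn: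
  assumes x: "x \<in> Xs t" and gu: "good (Suc t) u" and gv: "good (Suc t) v"
  shows "ennreal \<bar>zeta Xs Q u t (x,a) - zeta Xs Q v t (x,a)\<bar>
     \<le> (\<integral>\<^sup>+ y. ennreal (indicator (Xs (Suc t)) y * \<bar>u y - v y\<bar>) \<partial>Q t (x,a))"
proof -
  let ?M = "Q t (x,a)" let ?X = "Xs (Suc t)"
  have "zeta Xs Q u t (x,a) - zeta Xs Q v t (x,a) = integral\<^sup>L ?M (\<lambda>y. indicator ?X y * u y - indicator ?X y * v y)"
    unfolding zeta_alt using int_good[OF x gu] int_good[OF x gv] by simp
  moreover have "ennreal (norm (integral\<^sup>L ?M (\<lambda>y. indicator ?X y * u y - indicator ?X y * v y)))
      \<le> (\<integral>\<^sup>+ y. ennreal (norm (indicator ?X y * u y - indicator ?X y * v y)) \<partial>?M)"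
    by (rule integral_norm_bound_ennreal) (use int_good[OF x gu] int_good[OF x gv] in simp)
  moreover have "(\<integral>\<^sup>+ y. ennreal (norm (indicator ?X y * u y - indicator ?X y * v y)) \<partial>?M)
     = (\<integral>\<^sup>+ y. ennreal (indicator ?X y * \<bar>u y - v y\<bar>) \<partial>?M)"
    by (intro nn_integral_cong) (auto simp: indicator_def)
  ultimately show ?thesis by simp
qed

lemma zeta_diff_const:
  assumes x: "x \<in> Xs t" and gu: "good (Suc t) u" and gv: "good (Suc t) v"
    and D: "\<And>y. y \<in> Xs (Suc t) \<Longrightarrow> \<bar>u y - v y\<bar> \<le> D" and D0: "0 \<le> D"
  shows "\<bar>zeta Xs Q u t (x,a) - zeta Xs Q v t (x,a)\<bar> \<le> D"
proof -
  let ?M = "Q t (x,a)" let ?X = "Xs (Suc t)"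
  have "(\<integral>\<^sup>+ y. ennreal (indicator ?X y * \<bar>u y - v y\<bar>) \<partial>?M) \<le> (\<integral>\<^sup>+ y. ennreal D * indicator ?X y \<partial>?M)"
    by (intro nn_integral_mono) (auto simp: indicator_def intro: ennreal_leI D)
  also have "\<dots> = ennreal D" using nn_integral_cmult_indicator[OF XQ, of "ennreal D"] eQ by simp
  finally have "ennreal \<bar>zeta Xs Q u t (x,a) - zeta Xs Q v t (x,a)\<bar> \<le> ennreal D"
    using zeta_diff_enn[OF x gu gv] by (rule order.trans[rotated])
  then show ?thesis using D0 by (simp add: ennreal_le_iff)
qed

lemma zeta_bound:
  assumes x: "x \<in> Xs t" and g: "good (Suc t) v" and C: "0 \<le> C" and M: "0 \<le> M"
    and CM: "\<And>y. y \<in> Xs (Suc t) \<Longrightarrow> \<bar>v y\<bar> \<le> C * w y + M"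
  shows "\<bar>zeta Xs Q v t (x,a)\<bar> \<le> C * dbar * w x + M"
proof -
  let ?M = "Q t (x,a)" let ?X = "Xs (Suc t)"
  have w'[measurable]: "w \<in> borel_measurable ?M" using measurable_cong_sets[OF sQ refl] w_meas by auto
  have X'[measurable]: "?X \<in> sets ?M" by (rule XQ)
  have wm: "(\<lambda>y. ennreal (w y) * indicator ?X y) \<in> borel_measurable ?M"
    by measurable
  have im: "(\<lambda>y. indicator ?X y :: ennreal) \<in> borel_measurable ?M" using XQ by simp
  have "ennreal \<bar>zeta Xs Q v t (x,a)\<bar> = ennreal (norm (integral\<^sup>L ?M (\<lambda>y. indicator ?X y * v y)))"
    by (simp add: zeta_alt)
  also have "\<dots> \<le> (\<integral>\<^sup>+ y. ennreal (norm (indicator ?X y * v y)) \<partial>?M)"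
    by (rule integral_norm_bound_ennreal[OF int_good[OF x g]])
  also have "\<dots> \<le> (\<integral>\<^sup>+ y. ennreal C * (ennreal (w y) * indicator ?X y) + ennreal M * indicator ?X y \<partial>?M)"
  proof (intro nn_integral_mono)
    fix y
    show "ennreal (norm (indicator ?X y * v y)) \<le> ennreal C * (ennreal (w y) * indicator ?X y) + ennreal M * indicator ?X y"
    proof (cases "y \<in> ?X")
      case True
      have "ennreal \<bar>v y\<bar> \<le> ennreal (C * w y + M)" by (rule ennreal_leI[OF CM[OF True]])
      also have "\<dots> = ennreal C * ennreal (w y) + ennreal M"
        using C M less_imp_le[OF w_pos[of y]] by (simp add: ennreal_mult ennreal_plus)
      finally show ?thesis using True by simp
    qed simp
  qed
  also have "\<dots> = ennreal C * set_nn_integral ?M ?X (\<lambda>y. ennreal (w y)) + ennreal M * emeasure ?M ?X"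
    using nn_integral_add[of "\<lambda>y. ennreal C * (ennreal (w y) * indicator ?X y)" ?M "\<lambda>y. ennreal M * indicator ?X y"]
      nn_integral_cmult[OF wm, of "ennreal C"] nn_integral_cmult_indicator[OF XQ, of "ennreal M"] wm im
    by simp
  also have "\<dots> \<le> ennreal C * ennreal (dbar * w x) + ennreal M"
    using w_int[OF t x a] eQ by (simp add: mult_left_mono)
  also have "\<dots> = ennreal (C * dbar * w x + M)"
    using C M dbar less_imp_le[OF w_pos[of x]] by (simp add: ennreal_mult ennreal_plus mult.assoc)
  finally have le: "ennreal \<bar>zeta Xs Q v t (x,a)\<bar> \<le> ennreal (C * dbar * w x + M)" .
  have "0 \<le> C * dbar * w x + M" using C M dbar less_imp_le[OF w_pos[of x]] by simp
  then show ?thesis using le ennreal_le_iff by blast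
qed

lemma zeta_diff_tail:
  assumes x: "x \<in> Xs t" and gu: "good (Suc t) u" and gv: "good (Suc t) v"
    and R: "R \<in> sets borel" and N: "0 \<le> N" and th: "0 \<le> \<theta>"
    and D: "\<And>y. y \<in> Xs (Suc t) \<Longrightarrow> \<bar>u y - v y\<bar> \<le> N * w y * indicator R y"
    and Rth: "set_nn_integral (Q t (x,a)) R (\<lambda>y. ennreal (w y)) \<le> ennreal \<theta>"
  shows "\<bar>zeta Xs Q u t (x,a) - zeta Xs Q v t (x,a)\<bar> \<le> N * \<theta>"
proof -
  let ?M = "Q t (x,a)" let ?X = "Xs (Suc t)"
  have wm: "(\<lambda>y. ennreal (w y) * indicator R y) \<in> borel_measurable ?M"
    using measurable_cong_sets[OF sQ refl] w_meas R sQ by auto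
  have "(\<integral>\<^sup>+ y. ennreal (indicator ?X y * \<bar>u y - v y\<bar>) \<partial>?M) \<le> (\<integral>\<^sup>+ y. ennreal N * (ennreal (w y) * indicator R y) \<partial>?M)"
  proof (intro nn_integral_mono)
    fix y
    show "ennreal (indicator ?X y * \<bar>u y - v y\<bar>) \<le> ennreal N * (ennreal (w y) * indicator R y)"
    proof (cases "y \<in> ?X")
      case True
      have "ennreal \<bar>u y - v y\<bar> \<le> ennreal (N * w y * indicator R y)" by (rule ennreal_leI[OF D[OF True]])
      also have "\<dots> = ennreal N * (ennreal (w y) * indicator R y)"
        using N less_imp_le[OF w_pos[of y]] by (simp add: ennreal_mult indicator_def)
      finally show ?thesis using True by simp
    qed simp
  qed
  also have "\<dots> = ennreal N * set_nn_integral ?M R (\<lambda>y. ennreal (w y))"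
    using nn_integral_cmult[OF wm, of "ennreal N"] by simp
  also have "\<dots> \<le> ennreal N * ennreal \<theta>" using Rth by (simp add: mult_left_mono)
  also have "\<dots> = ennreal (N * \<theta>)" using N th by (simp add: ennreal_mult)
  finally have "ennreal \<bar>zeta Xs Q u t (x,a) - zeta Xs Q v t (x,a)\<bar> \<le> ennreal (N * \<theta>)"
    using zeta_diff_enn[OF x gu gv] by (rule order.trans[rotated])
  then show ?thesis using N th by (simp add: ennreal_le_iff)
qed

end

lemma bellman_elem_bound:
  assumes t: "t < T" and x: "x \<in> Xs t" and a: "a \<in> \<psi> x" and g: "good (Suc t) v" and C: "0 \<le> C" and M: "0 \<le> M"
    and CM: "\<And>y. y \<in> Xs (Suc t) \<Longrightarrow> \<bar>v y\<bar> \<le> C * w y + M"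
  shows "\<bar>c (x,a) + zeta Xs Q v t (x,a)\<bar> \<le> (cbar + C * dbar) * w x + M"
  using c_bnd[OF a] zeta_bound[OF t a x g C M CM] by (simp add: algebra_simps)

lemma bellman_bound:
  assumes t: "t < T" and x: "x \<in> Xs t" and g: "good (Suc t) v" and C: "0 \<le> C" and M: "0 \<le> M"
    and CM: "\<And>y. y \<in> Xs (Suc t) \<Longrightarrow> \<bar>v y\<bar> \<le> C * w y + M"
  shows "\<bar>bellman Xs \<psi> Q c t v x\<bar> \<le> (cbar + C * dbar) * w x + M"
  unfolding bellman_def by (rule inf_abs_le[OF \<psi>_ne bellman_elem_bound[OF t x _ g C M CM]])

lemma good_bellman:
  assumes t: "t < T" and g: "good (Suc t) v"
    and m: "(\<lambda>y. indicator (Xs t) y * bellman Xs \<psi> Q c t v y) \<in> borel_measurable borel"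
  shows "good t (bellman Xs \<psi> Q c t v)"
proof -
  obtain C M where CM: "0 \<le> C" "0 \<le> M" "\<forall>y\<in>Xs (Suc t). \<bar>v y\<bar> \<le> C * w y + M" using g unfolding good_def by auto
  have "\<forall>y\<in>Xs t. \<bar>bellman Xs \<psi> Q c t v y\<bar> \<le> (cbar + C * dbar) * w y + M"
    using bellman_bound[OF t _ g CM(1,2)] CM(3) by blast
  moreover have "0 \<le> cbar + C * dbar" using cbar CM dbar by simp
  ultimately show ?thesis unfolding good_def using m CM(2) by blast
qed

lemma bellman_diff:
  assumes t: "t < T" and x: "x \<in> Xs t" and gu: "good (Suc t) u" and gv: "good (Suc t) v"
    and D: "\<And>a. a \<in> \<psi> x \<Longrightarrow> \<bar>zeta Xs Q u t (x,a) - zeta Xs Q v t (x,a)\<bar> \<le> D"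
  shows "\<bar>bellman Xs \<psi> Q c t u x - bellman Xs \<psi> Q c t v x\<bar> \<le> D"
proof -
  obtain C M where CM: "0 \<le> C" "0 \<le> M" "\<forall>y\<in>Xs (Suc t). \<bar>u y\<bar> \<le> C * w y + M" using gu unfolding good_def by auto
  obtain C' M' where CM': "0 \<le> C'" "0 \<le> M'" "\<forall>y\<in>Xs (Suc t). \<bar>v y\<bar> \<le> C' * w y + M'" using gv unfolding good_def by auto
  show ?thesis unfolding bellman_def
    by (rule inf_diff_le[OF \<psi>_ne bellman_elem_bound[OF t x _ gu CM(1,2)] bellman_elem_bound[OF t x _ gv CM'(1,2)]])
       (use CM(3) CM'(3) D in auto)
qed

lemma comp:
  assumes gs: "\<And>s. t < s \<Longrightarrow> s \<le> T \<Longrightarrow> good s (J u s) \<and> good s (J v s)" and tT: "t < T"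
    and last: "\<And>x a. x \<in> Xs (T-1) \<Longrightarrow> a \<in> \<psi> x \<Longrightarrow>
        \<bar>zeta Xs Q u (T-1) (x,a) - zeta Xs Q v (T-1) (x,a)\<bar> \<le> D" and D0: "0 \<le> D"
  shows "\<forall>x\<in>Xs t. \<bar>J u t x - J v t x\<bar> \<le> D"
proof -
  have "t \<le> T - 1" using tT by simp
  then show ?thesis
  proof (induction rule: inc_induct)
    case base
    have T1: "T - 1 < T" and ST: "Suc (T-1) = T" using tT by auto
    have gT: "good T u" "good T v" using gs[of T] tT by (auto simp: J_T)
    show ?case
    proof
      fix x assume x: "x \<in> Xs (T-1)"
      show "\<bar>J u (T - 1) x - J v (T - 1) x\<bar> \<le> D"
        unfolding J_step[OF T1] ST J_T
        by (rule bellman_diff[OF T1 x]) (use gT ST last x in auto)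
    qed
  next
    case (step n)
    have nT: "n < T" and sT: "t < Suc n" "Suc n \<le> T" using step.hyps tT by auto
    have g: "good (Suc n) (J u (Suc n))" "good (Suc n) (J v (Suc n))" using gs[OF sT] by auto
    show ?case
    proof
      fix x assume x: "x \<in> Xs n"
      show "\<bar>J u n x - J v n x\<bar> \<le> D"
        unfolding J_step[OF nT]
      proof (rule bellman_diff[OF nT x g])
        fix a assume a: "a \<in> \<psi> x"
        show "\<bar>zeta Xs Q (J u (Suc n)) n (x, a) - zeta Xs Q (J v (Suc n)) n (x, a)\<bar> \<le> D"
          by (rule zeta_diff_const[OF nT a x g]) (use step.IH D0 in auto)
      qed
    qed
  qed
qed


lemma zeta_lip_gen:
  assumes t: "t < T" and L: "L-lipschitz_on (Xs (Suc t)) v" and x: "x \<in> Xs t" and y: "y \<in> Xs t"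
    and a: "a \<in> \<psi> x" and a': "a' \<in> \<psi> y"
  shows "\<bar>zeta Xs Q v t (x,a) - zeta Xs Q v t (y,a')\<bar> \<le> Lq * L * (dist x y + dist a a')"
proof (cases "Xs (Suc t) = {}")
  case True
  have "0 \<le> L" using L by (rule lipschitz_on_nonneg)
  then show ?thesis using True Lq by (simp add: zeta_alt)
next
  case False
  obtain g where g: "L-lipschitz_on UNIV g" "\<forall>x\<in>Xs (Suc t). g x = v x" using mcshane[OF L False] by blast
  have eq: "zeta Xs Q v t p = zeta Xs Q g t p" for p
    unfolding zeta_alt using g(2) by (intro Bochner_Integration.integral_cong) (auto simp: indicator_def)
  show ?thesis unfolding eq by (rule zlip[OF t x a y a' g(1)])
qed

lemma c_lip2:
  assumes a: "a \<in> \<psi> x" and a': "a' \<in> \<psi> y"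
  shows "\<bar>c (x,a) - c (y,a')\<bar> \<le> Lc * (dist x y + dist a a')"
proof -
  have "dist (c (x,a)) (c (y,a')) \<le> Lc * dist (x,a) (y,a')"
    by (rule lipschitz_onD[OF c_lip]) (use a a' in auto)
  also have "dist (x,a) (y,a') \<le> dist x y + dist a a'"
    using sqrt_sum_squares_le_sum_abs[of "dist x y" "dist a a'"] by (simp add: dist_Pair_Pair)
  then have "Lc * dist (x,a) (y,a') \<le> Lc * (dist x y + dist a a')"
    using lipschitz_on_nonneg[OF c_lip] by (rule mult_left_mono)
  finally show ?thesis by (simp add: dist_real_def)
qed

lemma haus_near:
  assumes a: "a \<in> \<psi> x"
  shows "\<exists>a'\<in>\<psi> y. dist a a' \<le> L\<psi> * dist x y"
proof -
  have "continuous_on (\<psi> y) (dist a)" by (intro continuous_on_dist continuous_on_const continuous_on_id)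
  then obtain a' where a': "a' \<in> \<psi> y" "\<forall>z\<in>\<psi> y. dist a a' \<le> dist a z"
    using continuous_attains_inf[OF \<psi>_compact \<psi>_ne] by blast
  have "dist a a' \<le> infdist a (\<psi> y)"
    unfolding infdist_def using \<psi>_ne[of y] a'(2) by (auto intro!: cINF_greatest)
  also have "infdist a (\<psi> y) \<le> (SUP z\<in>\<psi> x. infdist z (\<psi> y))"
  proof (rule cSUP_upper[OF a])
    obtain x0 e where e: "\<forall>z\<in>\<psi> x. dist x0 z \<le> e"
      using compact_imp_bounded[OF \<psi>_compact[of x]] unfolding bounded_def by blast
    show "bdd_above ((\<lambda>z. infdist z (\<psi> y)) ` \<psi> x)"
    proof (rule bdd_aboveI2)
      fix z assume z: "z \<in> \<psi> x"
      have "infdist z (\<psi> y) \<le> dist z a'" by (rule infdist_le[OF a'(1)])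
      also have "\<dots> \<le> dist x0 z + dist x0 a'" by (rule dist_triangle3)
      finally show "infdist z (\<psi> y) \<le> e + dist x0 a'" using e z by force
    qed
  qed
  also have "\<dots> \<le> hausdist (\<psi> x) (\<psi> y)" unfolding hausdist_def by simp
  also have "\<dots> \<le> L\<psi> * dist x y" by (rule \<psi>_lip)
  finally show ?thesis using a'(1) by blast
qed

lemma bellman_lip:
  assumes t: "t < T" and g: "good (Suc t) v" and L: "L-lipschitz_on (Xs (Suc t)) v"
  shows "((Lc + Lq * L) * (1 + L\<psi>))-lipschitz_on (Xs t) (bellman Xs \<psi> Q c t v)"
proof -
  obtain C M where CM: "0 \<le> C" "0 \<le> M" "\<forall>y\<in>Xs (Suc t). \<bar>v y\<bar> \<le> C * w y + M" using g unfolding good_def by auto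
  have L0: "0 \<le> L" using L by (rule lipschitz_on_nonneg)
  have Lc0: "0 \<le> Lc" using c_lip by (rule lipschitz_on_nonneg)
  define K1 where "K1 = Lc + Lq * L"
  have K1: "0 \<le> K1" unfolding K1_def using L0 Lc0 Lq by simp
  let ?F = "\<lambda>x a. c (x,a) + zeta Xs Q v t (x,a)"
  have one: "bellman Xs \<psi> Q c t v y \<le> bellman Xs \<psi> Q c t v x + K1 * (1 + L\<psi>) * dist x y"
    if x: "x \<in> Xs t" and y: "y \<in> Xs t" for x y
  proof -
    have "bellman Xs \<psi> Q c t v y - K1 * (1 + L\<psi>) * dist x y \<le> bellman Xs \<psi> Q c t v x"
      unfolding bellman_def[of _ _ _ _ _ _ x]
    proof (rule cINF_greatest[OF \<psi>_ne])
      fix a assume a: "a \<in> \<psi> x"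
      obtain a' where a': "a' \<in> \<psi> y" "dist a a' \<le> L\<psi> * dist x y" using haus_near[OF a] by blast
      have bdd: "bdd_below ((?F y) ` \<psi> y)"
        by (rule bdd_belowI2[of _ "- ((cbar + C * dbar) * w y + M)"])
           (use bellman_elem_bound[OF t y _ g CM(1,2)] CM(3) in force)
      have "bellman Xs \<psi> Q c t v y \<le> ?F y a'"
        unfolding bellman_def by (rule cINF_lower[OF bdd a'(1)])
      also have "?F y a' \<le> ?F x a + K1 * (dist x y + dist a a')"
        using c_lip2[OF a a'(1)] zeta_lip_gen[OF t L x y a a'(1)]
        unfolding K1_def by (simp add: algebra_simps abs_le_iff)
      also have "K1 * (dist x y + dist a a') \<le> K1 * (1 + L\<psi>) * dist x y"
        using mult_left_mono[OF a'(2) K1] by (simp add: algebra_simps)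
      finally show "bellman Xs \<psi> Q c t v y - K1 * (1 + L\<psi>) * dist x y \<le> ?F x a" by simp
    qed
    then show ?thesis by simp
  qed
  show ?thesis unfolding K1_def[symmetric]
  proof (rule lipschitz_onI)
    fix x y assume "x \<in> Xs t" "y \<in> Xs t"
    then show "dist (bellman Xs \<psi> Q c t v x) (bellman Xs \<psi> Q c t v y) \<le> K1 * (1 + L\<psi>) * dist x y"
      using one[of x y] one[of y x] by (simp add: dist_real_def dist_commute abs_le_iff)
  next
    show "0 \<le> K1 * (1 + L\<psi>)" using K1 L\<psi> by simp
  qed
qed

lemma lip_chain:
  assumes u: "L0-lipschitz_on UNIV u" and C: "0 \<le> C" and M: "0 \<le> M" and CM: "\<And>y. \<bar>u y\<bar> \<le> C * w y + M"
  shows "s \<le> T \<Longrightarrow> good s (J u s) \<and> (\<exists>L. L-lipschitz_on (Xs s) (J u s))"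
proof (induction rule: inc_induct)
  case base
  have "L0-lipschitz_on (Xs T) u" using u by (rule lipschitz_on_subset) simp
  moreover have "good T u" unfolding good_def
    using borel_measurable_continuous_onI[OF lipschitz_on_continuous_on[OF u]] Xs_borel[of T] C M CM
    by (intro conjI) (auto intro!: borel_measurable_times)
  ultimately show ?case by (auto simp: J_T)
next
  case (step n)
  have nT: "n < T" using step.hyps by simp
  from step.IH obtain L where g: "good (Suc n) (J u (Suc n))" and L: "L-lipschitz_on (Xs (Suc n)) (J u (Suc n))" by blast
  have l: "((Lc + Lq * L) * (1 + L\<psi>))-lipschitz_on (Xs n) (J u n)"
    unfolding J_step[OF nT] by (rule bellman_lip[OF nT g L])
  have "good n (J u n)" unfolding J_step[OF nT]
    by (rule good_bellman[OF nT g]) (use lip_meas[OF l Xs_borel[of n]] nT in \<open>simp add: J_step[OF nT]\<close>)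
  then show ?case using l by blast
qed

end


lemma g_comp_alt: assumes "0 < lam" shows "g_comp lam bi xi = max 0 (min 1 (lam * (bi - xi)))"
proof -
  have e1: "xi \<le> bi - 1 / lam \<longleftrightarrow> 1 \<le> lam * (bi - xi)" using assms by (simp add: field_simps)
  have e2: "xi < bi \<longleftrightarrow> 0 < lam * (bi - xi)" using assms by (simp add: zero_less_mult_iff)
  show ?thesis unfolding g_comp_def e1 e2 by (auto simp: max_def min_def algebra_simps)
qed

lemma clamp_lip: "\<bar>max 0 (min 1 p) - max 0 (min (1::real) q)\<bar> \<le> \<bar>p - q\<bar>"
  by (auto simp: max_def min_def)

lemma g_comp_range: "0 < lam \<Longrightarrow> 0 \<le> g_comp lam bi xi \<and> g_comp lam bi xi \<le> 1"
  by (simp add: g_comp_alt)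

lemma g_smooth_range: "0 < lam \<Longrightarrow> 0 \<le> g_smooth lam b x \<and> g_smooth lam b x \<le> 1"
  unfolding g_smooth_def using g_comp_range by (auto intro!: prod_nonneg prod_le_1)

lemma g_smooth_lip:
  assumes lam: "0 < lam"
  shows "(lam * real CARD('m))-lipschitz_on UNIV (g_smooth lam (b::real^'m))"
proof (rule lipschitz_onI)
  fix x y :: "real^'m"
  have "\<bar>g_smooth lam b x - g_smooth lam b y\<bar> \<le> (\<Sum>i\<in>UNIV. \<bar>g_comp lam (b$i) (x$i) - g_comp lam (b$i) (y$i)\<bar>)"
    unfolding g_smooth_def using norm_prod_diff[of UNIV "\<lambda>i. g_comp lam (b$i) (x$i)" "\<lambda>i. g_comp lam (b$i) (y$i)"]
      g_comp_range[OF lam] by auto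
  also have "\<dots> \<le> (\<Sum>i\<in>(UNIV::'m set). lam * dist x y)"
  proof (rule sum_mono)
    fix i
    have "\<bar>g_comp lam (b$i) (x$i) - g_comp lam (b$i) (y$i)\<bar> \<le> \<bar>lam * (b$i - x$i) - lam * (b$i - y$i)\<bar>"
      unfolding g_comp_alt[OF lam] by (rule clamp_lip)
    also have "lam * (b$i - x$i) - lam * (b$i - y$i) = lam * (y$i - x$i)" by (simp add: algebra_simps)
    also have "\<bar>lam * (y$i - x$i)\<bar> = lam * \<bar>(x - y) $ i\<bar>" using lam by (simp add: abs_mult abs_minus_commute)
    also have "\<dots> \<le> lam * norm (x - y)" using lam component_le_norm_cart[of "x - y" i] by simp
    finally show "\<bar>g_comp lam (b$i) (x$i) - g_comp lam (b$i) (y$i)\<bar> \<le> lam * dist x y" by (simp add: dist_norm)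
  qed
  also have "\<dots> = lam * real CARD('m) * dist x y" by simp
  finally show "dist (g_smooth lam b x) (g_smooth lam b y) \<le> lam * real CARD('m) * dist x y"
    by (simp add: dist_real_def)
next
  show "0 \<le> lam * real CARD('m)" using lam by simp
qed

lemma h_smooth_alt: "h_smooth lam b f1 f2 x = f2 x + (f1 x - f2 x) * g_smooth lam b x"
  unfolding h_smooth_def by (simp add: algebra_simps)

lemma h_smooth_lip:
  fixes b :: "real^'m"
  assumes lam: "0 < lam" and fa: "La-lipschitz_on UNIV fa" and fb: "Lbb-lipschitz_on UNIV fb"
    and Ba: "\<And>y. \<bar>fa y\<bar> \<le> Ba" and Bb: "\<And>y. \<bar>fb y\<bar> \<le> Bb"
  shows "\<exists>L. L-lipschitz_on UNIV (h_smooth lam b fa fb)"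
proof -
  have d: "(La + Lbb)-lipschitz_on UNIV (\<lambda>x. fa x - fb x)" by (rule lipschitz_on_diff[OF fa fb])
  have B0: "0 \<le> Ba + Bb" using Ba[of undefined] Bb[of undefined] by simp
  have m: "((Ba + Bb) * (lam * real CARD('m)) + 1 * (La + Lbb))-lipschitz_on UNIV (\<lambda>x. (fa x - fb x) * g_smooth lam b x)"
  proof (rule lip_mult[OF d g_smooth_lip[OF lam] _ _ B0])
    fix x
    have "\<bar>fa x\<bar> \<le> Ba" "\<bar>fb x\<bar> \<le> Bb" by (rule Ba, rule Bb)
    then show "\<bar>fa x - fb x\<bar> \<le> Ba + Bb" by arith
    show "\<bar>g_smooth lam b x\<bar> \<le> 1" using g_smooth_range[OF lam, of b x] by simp
  qed simp
  show ?thesis unfolding h_smooth_alt[abs_def] using lipschitz_on_add[OF fb m] by blast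
qed

lemma h_smooth_bound:
  assumes lam: "0 < lam" and Ba: "\<And>y. \<bar>fa y\<bar> \<le> Ba" and Bb: "\<And>y. \<bar>fb y\<bar> \<le> Bb"
  shows "\<bar>h_smooth lam b fa fb x\<bar> \<le> Ba + Bb"
proof -
  have g: "0 \<le> g_smooth lam b x" "g_smooth lam b x \<le> 1" using g_smooth_range[OF lam] by auto
  have "\<bar>h_smooth lam b fa fb x\<bar> \<le> \<bar>fa x\<bar> * g_smooth lam b x + \<bar>fb x\<bar> * (1 - g_smooth lam b x)"
    unfolding h_smooth_def using g by (metis abs_mult abs_of_nonneg abs_triangle_ineq diff_ge_0_iff_ge)
  also have "\<dots> \<le> Ba * 1 + Bb * 1"
    by (intro add_mono mult_mono) (use g Ba[of x] Bb[of x] abs_ge_zero in auto)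
  finally show ?thesis by simp
qed

lemma h_smooth_offR:
  assumes "x \<notin> R_set lam b"
  shows "h_smooth lam b f1 f2 x = (if vless x b then f1 x else f2 x)"
  using assms unfolding R_set_def h_smooth_def by (auto split: if_splits)

lemma vless_open: "open {x. vless x (b::real^'m)}"
proof -
  have "{x. vless x b} = (\<Inter>i. {x::real^'m. x$i < b$i})" by (auto simp: vless_def)
  then show ?thesis by (auto intro!: open_INT open_halfspace_component_lt_cart)
qed

lemma R_meas: assumes lam: "0 < lam" shows "R_set lam (b::real^'m) \<in> sets borel"
proof -
  have [measurable]: "g_smooth lam b \<in> borel_measurable borel"
    by (rule borel_measurable_continuous_onI[OF lipschitz_on_continuous_on[OF g_smooth_lip[OF lam]]])
  have [measurable]: "{x. vless x b} \<in> sets borel" by (rule borel_open[OF vless_open])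
  have "R_set lam b = {x \<in> space borel. g_smooth lam b x \<noteq> (if x \<in> {x. vless x b} then 1 else 0)}"
    unfolding R_set_def by simp
  also have "\<dots> \<in> sets borel" by measurable
  finally show ?thesis .
qed



theorem proposition4:
  fixes Xs :: "nat \<Rightarrow> (real^'m) set"
    and \<psi> :: "real^'m \<Rightarrow> 'a::{metric_space, second_countable_topology} set"
    and Q :: "nat \<Rightarrow> (real^'m) \<times> 'a \<Rightarrow> (real^'m) measure"
    and c :: "(real^'m) \<times> 'a \<Rightarrow> real"
    and h h1 h2 f1 f2 w :: "real^'m \<Rightarrow> real"
    and b :: "real^'m"
    and T :: nat
    and L\<psi> Lc Lh1 Lf1 Lf2 Lq cbar dbar :: real
  defines "K \<equiv> {(x, a). a \<in> \<psi> x}"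
      and "Kt \<equiv> \<lambda>t. {(x, a). x \<in> Xs t \<and> a \<in> \<psi> x}"
  assumes A_lc: "locally compact (UNIV :: 'a set)"
    and Xs_borel: "\<forall>t\<le>T. Xs t \<in> sets borel"
    and \<psi>_meas: "\<forall>x. \<psi> x \<in> sets borel"
    and \<psi>_nonempty: "\<forall>x. \<psi> x \<noteq> {}"
    and K_meas: "K \<in> sets borel"
    and Kt_meas: "\<forall>t\<le>T. Kt t \<in> sets borel"
    and Q_prob: "\<forall>t<T. \<forall>p\<in>K. prob_space (Q t p) \<and> sets (Q t p) = sets borel
                      \<and> emeasure (Q t p) (Xs (Suc t)) = 1"
    and Q_meas: "\<forall>t<T. Q t \<in> measurable (restrict_space borel K) (subprob_algebra borel)"
    and c_meas: "c \<in> borel_measurable (restrict_space borel K)"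
    \<comment> \<open>(2)\<close>
    and \<psi>_compact: "\<forall>x. compact (\<psi> x)"
    \<comment> \<open>(3)\<close>
    and L\<psi>_pos: "L\<psi> > 0"
    and \<psi>_lip: "\<forall>x y. hausdist (\<psi> x) (\<psi> y) \<le> L\<psi> * dist x y"
    \<comment> \<open>(4)\<close>
    and c_lip: "Lc-lipschitz_on K c"
    and h1_lip: "Lh1-lipschitz_on UNIV h1"
    and f1_lip: "Lf1-lipschitz_on UNIV f1" and f1_bdd: "bounded (range f1)"
    and f2_lip: "Lf2-lipschitz_on UNIV f2" and f2_bdd: "bounded (range f2)"
    and h2_def: "\<forall>x. h2 x = (if vless x b then f1 x else f2 x)"
    and h_def: "h = (\<lambda>x. h1 x + h2 x)"
    and w_pos: "\<forall>x. 0 < w x"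
    and w_lsc: "lsc_on UNIV w"
    and cbar_pos: "cbar > 0"
    and cost_bound: "\<forall>x. \<bar>h1 x\<bar> + (SUP y. \<bar>h2 y\<bar>) + (SUP a\<in>\<psi> x. \<bar>c (x, a)\<bar>) \<le> cbar * w x"
    \<comment> \<open>(5)\<close>
    and zeta_w_usc: "\<forall>t<T. usc_on (Kt t) (zeta Xs Q w t)"
    and dbar_pos: "dbar > 0"
    and zeta_w_bound: "\<forall>t<T. \<forall>p\<in>Kt t.
          set_nn_integral (Q t p) (Xs (Suc t)) (\<lambda>y. ennreal (w y)) \<le> ennreal (dbar * w (fst p))"
    \<comment> \<open>(6)\<close>
    and zeta_cont: "\<forall>t<T. \<forall>v::real^'m \<Rightarrow> real. continuous_on UNIV v \<and> bounded (range v)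
          \<longrightarrow> continuous_on K (zeta Xs Q v t)"
    \<comment> \<open>(7)\<close>
    and Lq_pos: "Lq > 0"
    and zeta_lip: "\<forall>t<T. \<forall>p\<in>Kt t. \<forall>p'\<in>Kt t. \<forall>(v::real^'m \<Rightarrow> real) Lv. Lv-lipschitz_on UNIV v \<longrightarrow>
          \<bar>zeta Xs Q v t p - zeta Xs Q v t p'\<bar> \<le> Lq * Lv * (dist (fst p) (fst p') + dist (snd p) (snd p'))"
    \<comment> \<open>(8)\<close>
    and tail: "\<forall>\<theta>>0. \<exists>\<Lambda>. \<forall>lam>\<Lambda>.
          (SUP p\<in>K. set_nn_integral (Q (T - 1) p) (R_set lam b) (\<lambda>y. ennreal (w y))) < ennreal \<theta>"
  shows "\<forall>\<theta>>0. \<exists>\<Lambda>::real. \<forall>lam>\<Lambda>. 0 < lam \<longrightarrow> (\<forall>t<T.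
          (SUP x\<in>Xs t. ereal \<bar>cost_to_go Xs \<psi> Q c (\<lambda>x. h1 x + h_smooth lam b f1 f2 x) T t x
                               - cost_to_go Xs \<psi> Q c h T t x\<bar>)
          \<le> (wnorm w (cost_to_go Xs \<psi> Q c h T T)
              + wnorm w (cost_to_go Xs \<psi> Q c (\<lambda>x. h1 x + h_smooth lam b f1 f2 x) T T)) * ereal \<theta>)"
proof -
  have wpos: "\<And>x. 0 < w x" using w_pos by blast
  have wmeas: "w \<in> borel_measurable borel"
  proof (subst borel_measurable_iff_greater, intro allI)
    fix r
    have "open {x. r < w x}"
    proof (subst open_dist, intro ballI)
      fix p assume "p \<in> {x. r < w x}"
      then have rp: "0 < w p - r" by simp
      obtain d where "d > 0" "\<forall>q\<in>UNIV. dist q p < d \<longrightarrow> w p - (w p - r) < w q"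
        using w_lsc rp unfolding lsc_on_def by blast
      then show "\<exists>e>0. \<forall>y. dist y p < e \<longrightarrow> y \<in> {x. r < w x}" by auto
    qed
    then show "{x \<in> space borel. r < w x} \<in> sets borel" by simp
  qed
  obtain B1 where B1: "\<And>y. \<bar>f1 y\<bar> \<le> B1" using f1_bdd unfolding bounded_iff by auto
  obtain B2 where B2: "\<And>y. \<bar>f2 y\<bar> \<le> B2" using f2_bdd unfolding bounded_iff by auto
  have B0: "0 \<le> B1" "0 \<le> B2" using B1[of b] B2[of b] by auto
  have h2B: "\<And>y. \<bar>h2 y\<bar> \<le> B1 + B2" using h2_def B1 B2 B0 by (metis add.commute add_increasing)
  have sup_h2: "\<And>y. \<bar>h2 y\<bar> \<le> (SUP y. \<bar>h2 y\<bar>)"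
    by (rule cSUP_upper[OF UNIV_I]) (rule bdd_aboveI2[where M="B1 + B2"], rule h2B)
  have sup_c: "\<bar>c (x,a)\<bar> \<le> (SUP a\<in>\<psi> x. \<bar>c (x,a)\<bar>)" if a: "a \<in> \<psi> x" for x a
  proof (rule cSUP_upper[OF a])
    obtain x0 e where e: "\<forall>z\<in>\<psi> x. dist x0 z \<le> e"
      using compact_imp_bounded[OF \<psi>_compact[rule_format, of x]] unfolding bounded_def by blast
    show "bdd_above ((\<lambda>a. \<bar>c (x,a)\<bar>) ` \<psi> x)"
    proof (rule bdd_aboveI2)
      fix z assume z: "z \<in> \<psi> x"
      have "dist (c (x,z)) (c (x,a)) \<le> Lc * dist (x,z) (x,a)"
        by (rule lipschitz_onD[OF c_lip]) (use a z in \<open>auto simp: K_def\<close>)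
      moreover have "dist (x,z) (x,a) \<le> e + e"
      proof -
        have "dist x0 z \<le> e" "dist x0 a \<le> e" using e a z by auto
        then show ?thesis using dist_triangle3[of z a x0] by (simp add: dist_Pair_Pair)
      qed
      moreover have "0 \<le> Lc" using c_lip by (rule lipschitz_on_nonneg)
      ultimately have "\<bar>c (x,z) - c (x,a)\<bar> \<le> Lc * (e + e)"
        by (metis dist_real_def mult_left_mono order_trans)
      then show "\<bar>c (x,z)\<bar> \<le> \<bar>c (x,a)\<bar> + Lc * (e + e)" by arith
    qed
  qed
  have bnds: "\<bar>h1 x\<bar> \<le> cbar * w x \<and> (\<forall>y. \<bar>h2 y\<bar> \<le> cbar * w x) \<and> (\<forall>a\<in>\<psi> x. \<bar>c (x,a)\<bar> \<le> cbar * w x)" for x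
  proof -
    obtain a0 where a0: "a0 \<in> \<psi> x" using \<psi>_nonempty by blast
    have cb: "\<bar>h1 x\<bar> + (SUP y. \<bar>h2 y\<bar>) + (SUP a\<in>\<psi> x. \<bar>c (x, a)\<bar>) \<le> cbar * w x" using cost_bound by blast
    have s1: "0 \<le> (SUP y. \<bar>h2 y\<bar>)" using sup_h2[of b] by linarith
    have s2: "0 \<le> (SUP a\<in>\<psi> x. \<bar>c (x, a)\<bar>)" using sup_c[OF a0] by linarith
    have a: "\<bar>h1 x\<bar> \<le> cbar * w x" using cb s1 s2 by linarith
    have b: "\<forall>y. \<bar>h2 y\<bar> \<le> cbar * w x"
    proof
      fix y show "\<bar>h2 y\<bar> \<le> cbar * w x" using cb s2 sup_h2[of y] abs_ge_zero[of "h1 x"] by linarith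
    qed
    have c: "\<forall>a\<in>\<psi> x. \<bar>c (x,a)\<bar> \<le> cbar * w x"
    proof
      fix a assume "a \<in> \<psi> x"
      then show "\<bar>c (x,a)\<bar> \<le> cbar * w x" using cb s1 sup_c[of a x] abs_ge_zero[of "h1 x"] by linarith
    qed
    show ?thesis using a b c by blast
  qed
  interpret M: mdpL Xs \<psi> Q c w T L\<psi> Lc Lq cbar dbar
  proof unfold_locales
    show "\<And>t. t \<le> T \<Longrightarrow> Xs t \<in> sets borel" using Xs_borel by blast
    show "\<And>x. \<psi> x \<noteq> {}" using \<psi>_nonempty by blast
    show "\<And>x. compact (\<psi> x)" using \<psi>_compact by blast
    show "0 \<le> L\<psi>" using L\<psi>_pos by simp
    show "\<And>x y. hausdist (\<psi> x) (\<psi> y) \<le> L\<psi> * dist x y" using \<psi>_lip by blast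
    show "Lc-lipschitz_on {(x, a). a \<in> \<psi> x} c" using c_lip unfolding K_def .
    show "\<And>t x a. t < T \<Longrightarrow> a \<in> \<psi> x \<Longrightarrow> prob_space (Q t (x, a)) \<and> sets (Q t (x, a)) = sets borel
        \<and> emeasure (Q t (x, a)) (Xs (Suc t)) = 1" using Q_prob unfolding K_def by blast
    show "\<And>x. 0 < w x" by (rule wpos)
    show "w \<in> borel_measurable borel" by (rule wmeas)
    show "\<And>x a. a \<in> \<psi> x \<Longrightarrow> \<bar>c (x, a)\<bar> \<le> cbar * w x" using bnds by blast
    show "0 \<le> cbar" "0 \<le> dbar" "0 \<le> Lq" using cbar_pos dbar_pos Lq_pos by auto
    show "\<And>t x a. t < T \<Longrightarrow> x \<in> Xs t \<Longrightarrow> a \<in> \<psi> x \<Longrightarrow>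
          set_nn_integral (Q t (x, a)) (Xs (Suc t)) (\<lambda>y. ennreal (w y)) \<le> ennreal (dbar * w x)"
      using zeta_w_bound unfolding Kt_def by fastforce
    show "\<And>t x a y a' v Lv. t < T \<Longrightarrow> x \<in> Xs t \<Longrightarrow> a \<in> \<psi> x \<Longrightarrow> y \<in> Xs t \<Longrightarrow> a' \<in> \<psi> y \<Longrightarrow>
          Lv-lipschitz_on UNIV v \<Longrightarrow>
          \<bar>zeta Xs Q v t (x,a) - zeta Xs Q v t (y,a')\<bar> \<le> Lq * Lv * (dist x y + dist a a')"
    proof -
      fix t x a y a' v Lv
      assume H: "t < T" "x \<in> Xs t" "a \<in> \<psi> x" "y \<in> Xs t" "a' \<in> \<psi> y" "Lv-lipschitz_on UNIV (v::real^'m \<Rightarrow> real)"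
      have "(x,a) \<in> Kt t" "(y,a') \<in> Kt t" using H unfolding Kt_def by auto
      then show "\<bar>zeta Xs Q v t (x,a) - zeta Xs Q v t (y,a')\<bar> \<le> Lq * Lv * (dist x y + dist a a')"
        using zeta_lip H by fastforce
    qed
  qed
  have Jeq: "\<And>u t. cost_to_go Xs \<psi> Q c u T t = M.J u t" by (simp add: M.J_def)
  define ul where "ul = (\<lambda>lam x. h1 x + h_smooth lam b f1 f2 x)"
  have hsb: "\<bar>h_smooth lam b f1 f2 y\<bar> \<le> B1 + B2" if lam: "0 < lam" for lam y
    by (rule h_smooth_bound[where fa=f1 and fb=f2 and Ba=B1 and Bb=B2, OF lam B1 B2])
  have ulip: "\<exists>L. L-lipschitz_on UNIV (ul lam)" if lam: "0 < lam" for lam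
  proof -
    obtain L where L: "L-lipschitz_on UNIV (h_smooth lam b f1 f2)" using h_smooth_lip[where fa=f1 and fb=f2 and Ba=B1 and Bb=B2, OF lam f1_lip f2_lip B1 B2] by blast
    show ?thesis unfolding ul_def using lipschitz_on_add[OF h1_lip L] by blast
  qed
  have ubnd: "\<bar>ul lam y\<bar> \<le> cbar * w y + (B1 + B2)" if lam: "0 < lam" for lam y
  proof -
    have "\<bar>h1 y\<bar> \<le> cbar * w y" using bnds[of y] by blast
    then show ?thesis using hsb[OF lam, of y] abs_triangle_ineq[of "h1 y" "h_smooth lam b f1 f2 y"]
      unfolding ul_def by linarith
  qed
  have ugood: "M.good s (M.J (ul lam) s)" if lam: "0 < lam" and s: "s \<le> T" for lam s
  proof -
    obtain L where L: "L-lipschitz_on UNIV (ul lam)" using ulip[OF lam] by blast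
    show ?thesis using M.lip_chain[OF L _ _ ubnd[OF lam] s] cbar_pos B0 by auto
  qed
  have [measurable]: "{x. vless x b} \<in> sets borel" by (rule borel_open[OF vless_open])
  have [measurable]: "h1 \<in> borel_measurable borel"
    by (rule borel_measurable_continuous_onI[OF lipschitz_on_continuous_on[OF h1_lip]])
  have [measurable]: "f1 \<in> borel_measurable borel"
    by (rule borel_measurable_continuous_onI[OF lipschitz_on_continuous_on[OF f1_lip]])
  have [measurable]: "f2 \<in> borel_measurable borel"
    by (rule borel_measurable_continuous_onI[OF lipschitz_on_continuous_on[OF f2_lip]])
  have hfun: "h = (\<lambda>x. h1 x + (if x \<in> {x. vless x b} then f1 x else f2 x))"
    unfolding h_def using h2_def by auto
  have hm: "h \<in> borel_measurable borel" unfolding hfun by measurable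
  have hb: "\<bar>h y\<bar> \<le> (2 * cbar) * w y + 0" for y
  proof -
    have "\<bar>h1 y\<bar> \<le> cbar * w y" "\<bar>h2 y\<bar> \<le> cbar * w y" using bnds[of y] by blast+
    then show ?thesis using abs_triangle_ineq[of "h1 y" "h2 y"] unfolding h_def by linarith
  qed
  have hT: "M.good T h" unfolding M.good_def
  proof (intro conjI)
    show "(\<lambda>y. indicator (Xs T) y * h y) \<in> borel_measurable borel"
      using hm Xs_borel by (intro borel_measurable_times) auto
    show "\<exists>C M. 0 \<le> C \<and> 0 \<le> M \<and> (\<forall>y\<in>Xs T. \<bar>h y\<bar> \<le> C * w y + M)"
      using hb cbar_pos by (intro exI[of _ "2 * cbar"] exI[of _ 0]) auto
  qed
  have diffR: "\<bar>ul lam y - h y\<bar> \<le> (2 * (B1 + B2)) * indicator (R_set lam b) y" if lam: "0 < lam" for lam y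
  proof (cases "y \<in> R_set lam b")
    case True
    have e: "ul lam y - h y = h_smooth lam b f1 f2 y - h2 y" by (simp add: ul_def h_def)
    show ?thesis unfolding e using True hsb[OF lam, of y] h2B[of y]
      abs_triangle_ineq4[of "h_smooth lam b f1 f2 y" "h2 y"] by simp
  next
    case False
    then show ?thesis using h_smooth_offR[OF False, of f1 f2] h2_def unfolding ul_def h_def by simp
  qed
  have Rset: "\<And>lam x a. (SUP p\<in>K. set_nn_integral (Q (T - 1) p) (R_set lam b) (\<lambda>y. ennreal (w y))) < ennreal \<theta>'
      \<Longrightarrow> a \<in> \<psi> x \<Longrightarrow> set_nn_integral (Q (T - 1) (x,a)) (R_set lam b) (\<lambda>y. ennreal (w y)) \<le> ennreal \<theta>'" for \<theta>'
  proof -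
    fix lam x a
    assume H: "(SUP p\<in>K. set_nn_integral (Q (T - 1) p) (R_set lam b) (\<lambda>y. ennreal (w y))) < ennreal \<theta>'" "a \<in> \<psi> x"
    have "(x,a) \<in> K" using H(2) unfolding K_def by simp
    then have "set_nn_integral (Q (T - 1) (x,a)) (R_set lam b) (\<lambda>y. ennreal (w y))
        \<le> (SUP p\<in>K. set_nn_integral (Q (T - 1) p) (R_set lam b) (\<lambda>y. ennreal (w y)))"
      by (rule SUP_upper)
    then show "set_nn_integral (Q (T - 1) (x,a)) (R_set lam b) (\<lambda>y. ennreal (w y)) \<le> ennreal \<theta>'"
      using H(1) by simp
  qed
  have hgood: "M.good s (M.J h s)" if s: "s \<le> T" for s
  proof (cases "\<forall>y. h2 y = 0")
    case True
    then have "h = h1" unfolding h_def by simp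
    then show ?thesis using M.lip_chain[OF h1_lip _ _ _ s, of cbar 0] bnds cbar_pos by auto
  next
    case False
    then obtain y0 where y0: "h2 y0 \<noteq> 0" by blast
    define \<delta> where "\<delta> = \<bar>h2 y0\<bar> / cbar"
    have \<delta>0: "0 < \<delta>" unfolding \<delta>_def using y0 cbar_pos by simp
    have w\<delta>: "\<delta> \<le> w x" for x
      using bnds[of x] cbar_pos unfolding \<delta>_def by (simp add: divide_le_eq mult.commute)
    define E where "E = 2 * (B1 + B2)"
    have E0: "0 \<le> E" unfolding E_def using B0 by simp
    have "\<forall>s'. n \<le> s' \<and> s' \<le> T \<longrightarrow> M.good s' (M.J h s')" if "n \<le> T" for n
      using that
    proof (induction rule: inc_induct)
      case base then show ?case using hT by (auto simp: M.J_T)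
    next
      case (step n)
      have nT: "n < T" using step.hyps by simp
      have gs: "M.good s (M.J (ul lam) s) \<and> M.good s (M.J h s)" if "0 < lam" "n < s" "s \<le> T" for lam s
        using ugood[OF that(1) that(3)] step.IH that by auto
      have T1: "T - 1 < T" and ST: "Suc (T - 1) = T" using nT by auto
      have approx: "\<exists>lam>0. \<forall>x\<in>Xs n. \<bar>M.J (ul lam) n x - M.J h n x\<bar> \<le> inverse (real (Suc k))" for k
      proof -
        define \<theta>k where "\<theta>k = \<delta> / ((E + 1) * real (Suc k))"
        have \<theta>k0: "0 < \<theta>k" unfolding \<theta>k_def using \<delta>0 E0 by simp
        obtain \<Lambda> where \<Lambda>: "\<forall>lam>\<Lambda>. (SUP p\<in>K. set_nn_integral (Q (T - 1) p) (R_set lam b) (\<lambda>y. ennreal (w y))) < ennreal \<theta>k"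
          using tail \<theta>k0 by blast
        define lam where "lam = max \<Lambda> 0 + 1"
        have lam: "0 < lam" "\<Lambda> < lam" unfolding lam_def by auto
        have gT: "M.good (Suc (T-1)) (ul lam)" "M.good (Suc (T-1)) h"
          using ugood[OF lam(1) order_refl] hT ST by (auto simp: M.J_T)
        define N where "N = E / \<delta>"
        have N0: "0 \<le> N" unfolding N_def using E0 \<delta>0 by simp
        have Dy: "\<bar>ul lam y - h y\<bar> \<le> N * w y * indicator (R_set lam b) y" for y
        proof -
          have "E * \<delta> \<le> E * w y" by (rule mult_left_mono[OF w\<delta>[of y] E0])
          then have "E \<le> N * w y" unfolding N_def using \<delta>0 by (simp add: le_divide_eq)
          then show ?thesis using diffR[OF lam(1), of y] unfolding E_def by (auto simp: indicator_def)
        qed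
        have last: "\<bar>zeta Xs Q (ul lam) (T-1) (x,a) - zeta Xs Q h (T-1) (x,a)\<bar> \<le> N * \<theta>k"
          if x: "x \<in> Xs (T-1)" and a: "a \<in> \<psi> x" for x a
          by (rule M.zeta_diff_tail[OF T1 a x gT R_meas[OF lam(1)] N0 less_imp_le[OF \<theta>k0]])
             (use Dy Rset[OF \<Lambda>[rule_format, OF lam(2)] a] in auto)
        have den: "0 < (E+1) * real (Suc k)" using E0 by simp
        have "N * \<theta>k = E / ((E+1) * real (Suc k))" unfolding N_def \<theta>k_def using \<delta>0 by simp
        also have "\<dots> \<le> (E+1) / ((E+1) * real (Suc k))" by (rule divide_right_mono) (use den in auto)
        also have "\<dots> = inverse (real (Suc k))" using den by (simp add: field_simps del: of_nat_Suc)
        finally have "N * \<theta>k \<le> inverse (real (Suc k))" .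
        moreover have "\<forall>x\<in>Xs n. \<bar>M.J (ul lam) n x - M.J h n x\<bar> \<le> N * \<theta>k"
          by (rule M.comp[OF _ nT last]) (use gs[OF lam(1)] N0 \<theta>k0 in auto)
        ultimately show ?thesis using lam(1) by force
      qed
      then obtain lk where lk: "\<And>k. 0 < lk k" "\<And>k. \<forall>x\<in>Xs n. \<bar>M.J (ul (lk k)) n x - M.J h n x\<bar> \<le> inverse (real (Suc k))"
        by metis
      have meas: "(\<lambda>y. indicator (Xs n) y * M.J h n y) \<in> borel_measurable borel"
      proof (rule borel_measurable_LIMSEQ_real)
        show "(\<lambda>y. indicator (Xs n) y * M.J (ul (lk k)) n y) \<in> borel_measurable borel" for k
          using ugood[OF lk(1) less_imp_le[OF nT]] unfolding M.good_def by blast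
        fix y
        show "(\<lambda>k. indicator (Xs n) y * M.J (ul (lk k)) n y) \<longlonglongrightarrow> indicator (Xs n) y * M.J h n y"
        proof (cases "y \<in> Xs n")
          case True
          have "(\<lambda>k. M.J (ul (lk k)) n y - M.J h n y) \<longlonglongrightarrow> 0"
            by (rule Lim_null_comparison[OF _ LIMSEQ_inverse_real_of_nat]) (use lk(2) True in auto)
          then show ?thesis using True by (simp add: LIM_zero_cancel)
        qed simp
      qed
      have "M.good n (M.J h n)" unfolding M.J_step[OF nT]
        by (rule M.good_bellman[OF nT]) (use step.IH meas nT in \<open>auto simp: M.J_step[OF nT] Suc_leI\<close>)
      then show ?case using step.IH by (metis Suc_leI le_neq_implies_less)
    qed
    then show ?thesis using s by blast
  qed
  show ?thesis
  proof (intro allI impI)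
    fix \<theta> :: real assume th: "\<theta> > 0"
    obtain \<Lambda> where \<Lambda>: "\<forall>lam>\<Lambda>. (SUP p\<in>K. set_nn_integral (Q (T - 1) p) (R_set lam b) (\<lambda>y. ennreal (w y))) < ennreal \<theta>"
      using tail th by blast
    show "\<exists>\<Lambda>::real. \<forall>lam>\<Lambda>. 0 < lam \<longrightarrow> (\<forall>t<T.
          (SUP x\<in>Xs t. ereal \<bar>cost_to_go Xs \<psi> Q c (\<lambda>x. h1 x + h_smooth lam b f1 f2 x) T t x
                               - cost_to_go Xs \<psi> Q c h T t x\<bar>)
          \<le> (wnorm w (cost_to_go Xs \<psi> Q c h T T)
              + wnorm w (cost_to_go Xs \<psi> Q c (\<lambda>x. h1 x + h_smooth lam b f1 f2 x) T T)) * ereal \<theta>)"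
    proof (intro exI[of _ \<Lambda>] allI impI)
      fix lam t assume lamL: "\<Lambda> < lam" and lam: "0 < lam" and tT: "t < T"
      have ul_eq: "(\<lambda>x. h1 x + h_smooth lam b f1 f2 x) = ul lam" by (simp add: ul_def)
      define N1 where "N1 = wnorm w h"
      define N2 where "N2 = wnorm w (ul lam)"
      have N1ge: "ereal (\<bar>h y\<bar> / w y) \<le> N1" for y unfolding N1_def wnorm_def by (rule SUP_upper) simp
      have N2ge: "ereal (\<bar>ul lam y\<bar> / w y) \<le> N2" for y unfolding N2_def wnorm_def by (rule SUP_upper) simp
      have N10: "0 \<le> N1" using N1ge[of b] wpos[of b] by (meson divide_nonneg_pos abs_ge_zero ereal_less_eq(5) order_trans)
      have N20: "0 \<le> N2" using N2ge[of b] wpos[of b] by (meson divide_nonneg_pos abs_ge_zero ereal_less_eq(5) order_trans)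
      have goal: "(SUP x\<in>Xs t. ereal \<bar>M.J (ul lam) t x - M.J h t x\<bar>) \<le> (N1 + N2) * ereal \<theta>"
      proof (cases "N1 = \<infinity> \<or> N2 = \<infinity>")
        case True
        then have "N1 + N2 = \<infinity>" using N10 N20 by auto
        then have inf: "(N1 + N2) * ereal \<theta> = \<infinity>" using th by simp
        show ?thesis unfolding inf by simp
      next
        case False
        then obtain n1 n2 where n1: "N1 = ereal n1" and n2: "N2 = ereal n2"
          using N10 N20 by (cases N1; cases N2) auto
        have n0: "0 \<le> n1" "0 \<le> n2" using N10 N20 n1 n2 by auto
        have hn1: "\<bar>h y\<bar> \<le> n1 * w y" for y using N1ge[of y] wpos[of y] n1 by (simp add: divide_le_eq)
        have hn2: "\<bar>ul lam y\<bar> \<le> n2 * w y" for y using N2ge[of y] wpos[of y] n2 by (simp add: divide_le_eq)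
        have Dy: "\<bar>ul lam y - h y\<bar> \<le> (n1 + n2) * w y * indicator (R_set lam b) y" for y
        proof (cases "y \<in> R_set lam b")
          case True
          have "\<bar>ul lam y - h y\<bar> \<le> n1 * w y + n2 * w y"
            using hn1[of y] hn2[of y] abs_triangle_ineq4[of "ul lam y" "h y"] by linarith
          then show ?thesis using True by (simp add: algebra_simps)
        next
          case False
          then show ?thesis using diffR[OF lam, of y] by simp
        qed
        have T1: "T - 1 < T" and ST: "Suc (T - 1) = T" using tT by auto
        have gT: "M.good (Suc (T-1)) (ul lam)" "M.good (Suc (T-1)) h"
          using ugood[OF lam order_refl] hT ST by (auto simp: M.J_T)
        have last: "\<bar>zeta Xs Q (ul lam) (T-1) (x,a) - zeta Xs Q h (T-1) (x,a)\<bar> \<le> (n1 + n2) * \<theta>"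
          if x: "x \<in> Xs (T-1)" and a: "a \<in> \<psi> x" for x a
          by (rule M.zeta_diff_tail[OF T1 a x gT R_meas[OF lam]]) 
             (use n0 th Dy Rset[OF \<Lambda>[rule_format, OF lamL] a] in auto)
        have bnd: "\<forall>x\<in>Xs t. \<bar>M.J (ul lam) t x - M.J h t x\<bar> \<le> (n1 + n2) * \<theta>"
          by (rule M.comp[OF _ tT last]) (use ugood[OF lam] hgood n0 th in auto)
        have "(SUP x\<in>Xs t. ereal \<bar>M.J (ul lam) t x - M.J h t x\<bar>) \<le> ereal ((n1 + n2) * \<theta>)"
          by (rule SUP_least) (use bnd in auto)
        then show ?thesis using n1 n2 by simp
      qed
      show "(SUP x\<in>Xs t. ereal \<bar>cost_to_go Xs \<psi> Q c (\<lambda>x. h1 x + h_smooth lam b f1 f2 x) T t x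
                               - cost_to_go Xs \<psi> Q c h T t x\<bar>)
          \<le> (wnorm w (cost_to_go Xs \<psi> Q c h T T)
              + wnorm w (cost_to_go Xs \<psi> Q c (\<lambda>x. h1 x + h_smooth lam b f1 f2 x) T T)) * ereal \<theta>"
        unfolding ul_eq Jeq M.J_T using goal unfolding N1_def N2_def .
    qed
  qed
qed

end
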